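(* Let $m\ge0$ and $k\ge1$ be integers and $n\ge0$. Then $$\lim_{q\to1}\frac{\sum_{j=0}^{2n}(-1)^jq^{mj}\begin{bmatrix} 2n\\ j\end{bmatrix}_{q^k}}{(q;q^2)_n}=k^n,\qquad \lim_{q\to1}\frac{\sum_{j=0}^{2n+1}(-1)^jq^{mj}\begin{bmatrix} 2n+1\\ j\end{bmatrix}_{q^k}}{(q;q^2)_{n+1}}=mk^n.$$
   Context: $(x;q)_n=\prod_{j=0}^{n-1}(1-q^jx)$. The Gaussian binomial coefficient is $\begin{bmatrix} n\\ j\end{bmatrix}_q=\frac{(q;q)_n}{(q;q)_j(q;q)_{n-j}}$ for $0\le j\le n$, a polynomial in $q$; $\begin{bmatrix} n\\ j\end{bmatrix}_{q^k}$ is this with $q$ replaced by $q^k$. The quotients are rational functions of $q$ and the limits are taken as $q\to1$. *)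

theory Defs
  imports "HOL-Analysis.Analysis"
begin

definition qpoch :: "real \<Rightarrow> real \<Rightarrow> nat \<Rightarrow> real" where
  "qpoch x q n = (\<Prod>j<n. 1 - q ^ j * x)"

definition qbinom :: "nat \<Rightarrow> nat \<Rightarrow> real \<Rightarrow> real" where
  "qbinom n j q = qpoch q q n / (qpoch q q j * qpoch q q (n - j))"

end

theory Submission
  imports Defs
begin


lemma qpoch_Suc: "qpoch x q (Suc n) = qpoch x q n * (1 - q ^ n * x)"
  by (simp add: qpoch_def)

lemma pow_ne1: assumes "(Q::real) > 0" "Q \<noteq> 1" "n > 0" shows "Q ^ n \<noteq> 1"
proof
  assume "Q ^ n = 1" then have "Q ^ n = 1 ^ n" by simp
  then have "Q = 1" using power_eq_imp_eq_base[of Q n 1] assms by simp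
  then show False using assms by simp
qed

lemma qpoch_nz:
  assumes "Q > 0" "Q \<noteq> 1" shows "qpoch Q Q n \<noteq> 0"
  unfolding qpoch_def
proof -
  have "\<forall>i\<in>{..<n}. 1 - Q ^ i * Q \<noteq> 0"
  proof
    fix i assume "i \<in> {..<n}"
    have "Q ^ Suc i \<noteq> 1" using assms pow_ne1 by blast
    then show "1 - Q ^ i * Q \<noteq> 0" by (simp add: mult.commute)
  qed
  then show "(\<Prod>j<n. 1 - Q ^ j * Q) \<noteq> 0" by (simp add: prod_zero_iff)
qed

definition cc :: "nat \<Rightarrow> nat \<Rightarrow> real \<Rightarrow> real" where
  "cc N j Q = (if j \<le> N then qbinom N j Q else 0)"

lemma qbinom_0: assumes "Q > 0" "Q \<noteq> 1" shows "qbinom N 0 Q = 1"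
  using qpoch_nz[OF assms] by (simp add: qbinom_def qpoch_def)

lemma qbinom_diag: assumes "Q > 0" "Q \<noteq> 1" shows "qbinom N N Q = 1"
  using qpoch_nz[OF assms] by (simp add: qbinom_def qpoch_def)

lemma coeff_abs:
  fixes a b c s t w :: real
  assumes "b \<noteq> 0" "c \<noteq> 0" "1 - s \<noteq> 0" "1 - t \<noteq> 0"
  shows "a*(1-w)*(1-s*t)/(b*(1-s)*(c*(1-t))) = a*(1-w)/(b*(1-s)*c) + a*(1-w)/(b*(c*(1-t))) - (1-w)*(a/(b*c))"
proof -
  have "b*(1-s)*(c*(1-t)) \<noteq> 0" "b*(1-s)*c \<noteq> 0" "b*(c*(1-t)) \<noteq> 0" "b*c \<noteq> 0"
    using assms by auto
  then show ?thesis
    apply (simp only: add_divide_eq_iff diff_divide_eq_iff divide_add_eq_iff divide_diff_eq_iff eq_divide_eq divide_eq_eq times_divide_eq_right times_divide_eq_left)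
    apply (simp add: divide_simps)
    apply (simp add: algebra_simps)
    done
qed

lemma coeff_r:
  assumes "Q > 0" "Q \<noteq> 1"
  shows "qbinom (j+r+2) (j+1) Q = qbinom (j+r+1) (j+1) Q + qbinom (j+r+1) j Q
           - (1 - Q^(j+r+1)) * qbinom (j+r) j Q"
proof -
  have e1: "j+r+2 - (j+1) = r+1" "j+r+1-(j+1) = r" "j+r+1-j = r+1" "j+r-j = r" by auto
  have n: "qpoch Q Q i \<noteq> 0" for i using qpoch_nz[OF assms] .
  have a: "1 - Q^(j+1) \<noteq> 0" "1 - Q^(r+1) \<noteq> 0"
    using pow_ne1[OF assms, of "j+1"] pow_ne1[OF assms, of "r+1"] by auto
  have p: "Q^(j+r+2) = Q^(j+1) * Q^(r+1)" by (simp add: power_add[symmetric])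
  have q1: "qpoch Q Q (j+r+1) = qpoch Q Q (j+r) * (1 - Q^(j+r+1))"
    using qpoch_Suc[of Q Q "j+r"] by (simp add: mult.commute)
  have q2: "qpoch Q Q (j+r+2) = qpoch Q Q (j+r) * (1 - Q^(j+r+1)) * (1 - Q^(j+r+2))"
    using qpoch_Suc[of Q Q "j+r+1"] q1 by (simp add: mult.commute)
  have q3: "qpoch Q Q (j+1) = qpoch Q Q j * (1 - Q^(j+1))"
    using qpoch_Suc[of Q Q "j"] by (simp add: mult.commute)
  have q4: "qpoch Q Q (r+1) = qpoch Q Q r * (1 - Q^(r+1))"
    using qpoch_Suc[of Q Q "r"] by (simp add: mult.commute)
  show ?thesis
    unfolding qbinom_def e1 q1 q2 q3 q4 p
    by (rule coeff_abs[OF n n a])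
qed


lemma coeff_all:
  assumes "Q > 0" "Q \<noteq> 1"
  shows "cc (N+2) (Suc j) Q = cc (N+1) (Suc j) Q + cc (N+1) j Q - (1 - Q^(N+1)) * cc N j Q"
proof (cases "j \<le> N")
  case True
  then obtain r where r: "N = j + r" using le_Suc_ex by blast
  show ?thesis using coeff_r[OF assms, of j r] unfolding cc_def r by simp
next
  case False
  show ?thesis
  proof (cases "j = N+1")
    case True
    then show ?thesis using qbinom_diag[OF assms] unfolding cc_def by simp
  next
    case False
    then show ?thesis using \<open>\<not> j \<le> N\<close> unfolding cc_def by simp
  qed
qed

fun G :: "real \<Rightarrow> real \<Rightarrow> nat \<Rightarrow> real" where
  "G x Q 0 = 1"
| "G x Q (Suc 0) = 1 - x"
| "G x Q (Suc (Suc N)) = (1 - x) * G x Q (Suc N) + x * (1 - Q ^ Suc N) * G x Q N"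

definition T :: "real \<Rightarrow> real \<Rightarrow> nat \<Rightarrow> nat \<Rightarrow> real" where
  "T x Q N M = (\<Sum>j<M. (-x)^j * cc N j Q)"

lemma T_ext: assumes "M \<ge> Suc N" shows "T x Q N M = T x Q N (Suc N)"
proof -
  obtain d where M: "M = Suc N + d" using assms le_Suc_ex by blast
  have "T x Q N (Suc N + d) = T x Q N (Suc N)"
    by (induction d) (auto simp: T_def cc_def)
  then show ?thesis using M by simp
qed

lemma T_G:
  shows "Q > 0 \<Longrightarrow> Q \<noteq> 1 \<Longrightarrow> M > N \<Longrightarrow> T x Q N M = G x Q N"
proof (induction x Q N arbitrary: M rule: G.induct)
  case (1 x Q)
  note assms = 1(1,2)
  from 1 have "T x Q 0 M = T x Q 0 1" using T_ext[of 0 M] by simp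
  then show ?case by (simp add: T_def cc_def qbinom_0[OF assms])
next
  case (2 x Q)
  note assms = 2(1,2)
  from 2 have "T x Q 1 M = T x Q 1 2" using T_ext[of 1 M] by (simp add: numeral_2_eq_2)
  then show ?case by (simp add: T_def cc_def qbinom_0[OF assms] qbinom_diag[OF assms] numeral_2_eq_2)
next
  case (3 x Q N)
  note assms = 3(3,4)
  obtain M' where M: "M = Suc M'" using 3(5) by (cases M) auto
  have "T x Q (Suc (Suc N)) M = cc (N+2) 0 Q + (\<Sum>j<M'. (-x)^(Suc j) * cc (N+2) (Suc j) Q)"
    unfolding T_def M sum.lessThan_Suc_shift by simp
  also have "\<dots> = (cc (N+1) 0 Q + (\<Sum>j<M'. (-x)^(Suc j) * cc (N+1) (Suc j) Q))
      + (-x) * (\<Sum>j<M'. (-x)^j * cc (N+1) j Q)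
      - (1 - Q^(N+1)) * (-x) * (\<Sum>j<M'. (-x)^j * cc N j Q)"
  proof -
    have c0: "cc n 0 Q = 1" for n by (simp add: cc_def qbinom_0[OF assms])
    have "(\<Sum>j<M'. (-x)^(Suc j) * cc (N+2) (Suc j) Q) =
      (\<Sum>j<M'. (-x)^(Suc j) * cc (N+1) (Suc j) Q + (-x) * ((-x)^j * cc (N+1) j Q)
         - (1 - Q^(N+1)) * (-x) * ((-x)^j * cc N j Q))"
    proof (rule sum.cong)
      fix j
      have ce: "cc (Suc (Suc N)) (Suc j) Q = cc (Suc N) (Suc j) Q + cc (Suc N) j Q - (1 - Q^(Suc N)) * cc N j Q"
        using coeff_all[OF assms, of N j] by (simp add: numeral_2_eq_2)
      show "(-x)^(Suc j) * cc (N+2) (Suc j) Q = (-x)^(Suc j) * cc (N+1) (Suc j) Q + (-x) * ((-x)^j * cc (N+1) j Q)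
         - (1 - Q^(N+1)) * (-x) * ((-x)^j * cc N j Q)"
        unfolding numeral_2_eq_2 add_Suc_right add_0_right Suc_eq_plus1[symmetric] ce
        by (simp add: algebra_simps)
    qed simp
    also have "\<dots> = (\<Sum>j<M'. (-x)^(Suc j) * cc (N+1) (Suc j) Q) + (-x) * (\<Sum>j<M'. (-x)^j * cc (N+1) j Q)
         - (1 - Q^(N+1)) * (-x) * (\<Sum>j<M'. (-x)^j * cc N j Q)"
      by (simp only: sum_subtractf sum.distrib sum_distrib_left)
    finally show ?thesis by (simp add: c0 numeral_2_eq_2)
  qed
  also have "\<dots> = T x Q (N+1) M - x * T x Q (N+1) M' + (1 - Q^(N+1)) * x * T x Q N M'"
    unfolding T_def M sum.lessThan_Suc_shift by simp
  also have "\<dots> = G x Q (N+1) - x * G x Q (N+1) + (1 - Q^(N+1)) * x * G x Q N"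
    using 3(1)[OF assms, of M] 3(1)[OF assms, of M'] 3(2)[OF assms, of M'] 3(5) M by simp
  finally show ?case by (simp add: algebra_simps)
qed



definition Sg :: "nat \<Rightarrow> real \<Rightarrow> real" where "Sg p q = (\<Sum>i<p. q ^ i)"

lemma one_minus_pow: "1 - q ^ p = (1 - q) * Sg p q"
  unfolding Sg_def by (rule one_diff_power_eq)

lemma Sg_1: "Sg p 1 = real p" by (simp add: Sg_def)

lemma Sg_cont: "isCont (Sg p) x"
  unfolding Sg_def by (intro continuous_intros)

fun AB :: "nat \<Rightarrow> nat \<Rightarrow> real \<Rightarrow> nat \<Rightarrow> real \<times> real" where
  "AB m k q 0 = (1, Sg m q)"
| "AB m k q (Suc n) = (let a = fst (AB m k q n); b = snd (AB m k q n);
     a' = (1 - q) * Sg m q * b + q ^ m * Sg (k * (2*n+1)) q * a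
   in (a', Sg m q * a' + q ^ m * Sg (k * (2*n+2)) q * b))"

lemma G_AB:
  "G (q^m) (q^k) (2*n) = (1-q)^n * fst (AB m k q n) \<and>
   G (q^m) (q^k) (2*n+1) = (1-q)^(n+1) * snd (AB m k q n)"
proof (induction n)
  case 0
  then show ?case by (simp add: one_minus_pow)
next
  case (Suc n)
  have e1: "2 * Suc n = Suc (Suc (2*n))" by simp
  have e2: "2 * Suc n + 1 = Suc (Suc (Suc (2*n)))" by simp
  have p1: "1 - (q^k)^(Suc (2*n)) = (1-q) * Sg (k*(2*n+1)) q"
    by (simp add: power_mult[symmetric] power_add[symmetric] one_minus_pow[symmetric] mult.commute)
  have p2: "1 - (q^k)^(Suc (Suc (2*n))) = (1-q) * Sg (k*(2*n+2)) q"
    by (simp add: power_mult[symmetric] power_add[symmetric] one_minus_pow[symmetric] mult.commute)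
  have ga: "G (q^m) (q^k) (2*n) = (1-q)^n * fst (AB m k q n)"
   and gb: "G (q^m) (q^k) (Suc (2*n)) = (1-q)^(n+1) * snd (AB m k q n)" using Suc.IH by auto
  have A: "G (q^m) (q^k) (2 * Suc n) = (1-q)^(Suc n) * fst (AB m k q (Suc n))"
  proof -
    have "G (q^m) (q^k) (2 * Suc n) = (1 - q^m) * G (q^m) (q^k) (Suc (2*n))
        + q^m * (1 - (q^k)^Suc (2*n)) * G (q^m) (q^k) (2*n)"
      by (simp only: e1 G.simps)
    also have "\<dots> = (1-q) * Sg m q * ((1-q)^(n+1) * snd (AB m k q n))
        + q^m * ((1-q) * Sg (k*(2*n+1)) q) * ((1-q)^n * fst (AB m k q n))"
      by (simp only: one_minus_pow[of q m] ga gb p1)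
    also have "\<dots> = (1-q)^(Suc n) * fst (AB m k q (Suc n))"
      by (simp add: Let_def algebra_simps)
    finally show ?thesis .
  qed
  have B: "G (q^m) (q^k) (2 * Suc n + 1) = (1-q)^(Suc n + 1) * snd (AB m k q (Suc n))"
  proof -
    have "G (q^m) (q^k) (2 * Suc n + 1) = (1 - q^m) * G (q^m) (q^k) (2 * Suc n)
        + q^m * (1 - (q^k)^Suc (Suc (2*n))) * G (q^m) (q^k) (Suc (2*n))"
      unfolding e2 by (simp only: e1 G.simps(3))
    also have "\<dots> = (1-q) * Sg m q * ((1-q)^(Suc n) * fst (AB m k q (Suc n)))
        + q^m * ((1-q) * Sg (k*(2*n+2)) q) * ((1-q)^(n+1) * snd (AB m k q n))"
      by (simp only: one_minus_pow[of q m] A gb p2)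
    also have "\<dots> = (1-q)^(Suc n + 1) * snd (AB m k q (Suc n))"
      by (simp add: Let_def algebra_simps)
    finally show ?thesis .
  qed
  show ?case using A B by simp
qed

lemma AB_cont: "isCont (\<lambda>q. fst (AB m k q n)) x \<and> isCont (\<lambda>q. snd (AB m k q n)) x"
proof (induction n)
  case 0
  then show ?case by (simp add: Sg_cont)
next
  case (Suc n)
  then show ?case by (simp add: Let_def Sg_cont continuous_intros)
qed

definition dd :: "nat \<Rightarrow> real" where "dd n = (\<Prod>i<n. real (2*i+1))"

lemma AB_1: "fst (AB m k 1 n) = dd n * real k ^ n \<and> snd (AB m k 1 n) = real m * dd (n+1) * real k ^ n"
proof (induction n)
  case 0
  then show ?case by (simp add: Sg_1 dd_def)
next
  case (Suc n)
  then show ?case by (simp add: Let_def Sg_1 dd_def algebra_simps)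
qed

definition C :: "nat \<Rightarrow> real \<Rightarrow> real" where "C n q = (\<Prod>i<n. Sg (2*i+1) q)"

lemma qpoch_C: "qpoch q (q^2) n = (1-q)^n * C n q"
proof -
  have "qpoch q (q^2) n = (\<Prod>i<n. (1-q) * Sg (2*i+1) q)"
    unfolding qpoch_def
    by (rule prod.cong) (simp_all add: one_minus_pow[symmetric] power_mult[symmetric] mult.commute)
  then show ?thesis by (simp add: prod.distrib C_def)
qed

lemma C_cont: "isCont (C n) x" unfolding C_def by (intro continuous_intros Sg_cont)
lemma C_1: "C n 1 = dd n" by (simp add: C_def dd_def Sg_1)
lemma dd_pos: "dd n > 0" by (simp add: dd_def prod_pos)



lemma sum_T: "(\<Sum>j=0..N. (-1) ^ j * q ^ (m * j) * qbinom N j (q ^ k)) = T (q^m) (q^k) N (Suc N)"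
  unfolding T_def atLeast0AtMost lessThan_Suc_atMost
proof (rule sum.cong)
  fix j assume "j \<in> {..N}"
  then have "j \<le> N" by simp
  then show "(-1) ^ j * q ^ (m * j) * qbinom N j (q ^ k) = (- (q^m)) ^ j * cc N j (q^k)"
    by (simp only: cc_def if_True power_minus[of "q^m" j] power_mult[of q m j])
qed simp

lemma ev_near1: "eventually (\<lambda>q::real. q > 0 \<and> q \<noteq> 1) (at 1)"
proof -
  have "eventually (\<lambda>q::real. q > 0) (at 1)"
    using order_tendstoD(1)[OF tendsto_ident_at[of "1::real" UNIV], of 0] by simp
  moreover have "eventually (\<lambda>q::real. q \<noteq> 1) (at 1)" by (simp add: eventually_at_filter)
  ultimately show ?thesis by eventually_elim auto
qed

lemma main_lim:
  fixes m k n :: nat and N p :: nat and F :: "real \<Rightarrow> real" and L :: real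
  assumes k: "k \<ge> 1"
  and eqG: "\<And>q. G (q^m) (q^k) N = (1-q)^p * F q"
  and eqQ: "\<And>q. qpoch q (q^2) p = (1-q)^p * C p q"
  and cF: "isCont F 1" and F1: "F 1 / C p 1 = L"
  shows "((\<lambda>q::real. (\<Sum>j=0..N. (-1) ^ j * q ^ (m * j) * qbinom N j (q ^ k)) / qpoch q (q ^ 2) p) \<longlongrightarrow> L) (at 1)"
proof -
  have ev: "eventually (\<lambda>q. (\<Sum>j=0..N. (-1) ^ j * q ^ (m * j) * qbinom N j (q ^ k)) / qpoch q (q ^ 2) p
            = F q / C p q) (at 1)"
    using ev_near1
  proof eventually_elim
    case (elim q)
    have Q: "q^k > 0" "q^k \<noteq> 1" using elim k pow_ne1[of q k] by auto
    have "(1-q)^p \<noteq> 0" using elim by simp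
    have "T (q^m) (q^k) N (Suc N) = G (q^m) (q^k) N" using T_G[OF Q] by simp
    then show ?case
      unfolding sum_T eqG eqQ using \<open>(1-q)^p \<noteq> 0\<close> elim by simp
  qed
  have "isCont (\<lambda>q. F q / C p q) 1"
  proof (rule isCont_divide[OF cF C_cont])
    show "C p 1 \<noteq> 0" using C_1[of p] dd_pos[of p] by simp
  qed
  then have "((\<lambda>q. F q / C p q) \<longlongrightarrow> L) (at 1)"
    using F1 isCont_def by blast
  then show ?thesis using tendsto_cong[OF ev] by simp
qed

theorem theorem2p2:
  fixes m k n :: nat
  assumes "k \<ge> 1"
  shows "(((\<lambda>q::real. (\<Sum>j=0..2*n. (-1) ^ j * q ^ (m * j) * qbinom (2*n) j (q ^ k))
            / qpoch q (q ^ 2) n) \<longlongrightarrow> real k ^ n) (at 1)) \<and>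
         (((\<lambda>q::real. (\<Sum>j=0..2*n+1. (-1) ^ j * q ^ (m * j) * qbinom (2*n+1) j (q ^ k))
            / qpoch q (q ^ 2) (n + 1)) \<longlongrightarrow> real m * real k ^ n) (at 1))"
proof
  show "((\<lambda>q::real. (\<Sum>j=0..2*n. (-1) ^ j * q ^ (m * j) * qbinom (2*n) j (q ^ k))
            / qpoch q (q ^ 2) n) \<longlongrightarrow> real k ^ n) (at 1)"
  proof (rule main_lim[OF assms, where F = "\<lambda>q. fst (AB m k q n)"])
    show "G (q^m) (q^k) (2*n) = (1-q)^n * fst (AB m k q n)" for q::real using G_AB by blast
    show "qpoch q (q^2) n = (1-q)^n * C n q" for q by (rule qpoch_C)
    show "isCont (\<lambda>q. fst (AB m k q n)) 1" using AB_cont by blast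
    show "fst (AB m k 1 n) / C n 1 = real k ^ n" using AB_1[of m k n] C_1[of n] dd_pos[of n] by simp
  qed
  show "((\<lambda>q::real. (\<Sum>j=0..2*n+1. (-1) ^ j * q ^ (m * j) * qbinom (2*n+1) j (q ^ k))
            / qpoch q (q ^ 2) (n + 1)) \<longlongrightarrow> real m * real k ^ n) (at 1)"
  proof (rule main_lim[OF assms, where F = "\<lambda>q. snd (AB m k q n)"])
    show "G (q^m) (q^k) (2*n+1) = (1-q)^(n+1) * snd (AB m k q n)" for q::real using G_AB by blast
    show "qpoch q (q^2) (n+1) = (1-q)^(n+1) * C (n+1) q" for q by (rule qpoch_C)
    show "isCont (\<lambda>q. snd (AB m k q n)) 1" using AB_cont by blast
    show "snd (AB m k 1 n) / C (n+1) 1 = real m * real k ^ n"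
      using AB_1[of m k n] C_1[of "n+1"] dd_pos[of "n+1"] by simp
  qed
qed


end
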